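(* Let $f_0(x)=\log|\cos\pi x|$ on $\mathbb T$. Then $\alpha(0):=\inf_{\mu\in\mathcal M_T}\int f_0\,d\mu=-\log2$ and $\beta(0):=\sup_{\mu\in\mathcal M_T}\int f_0\,d\mu=0$. Moreover, the limit $$\lim_{n\to\infty}\frac1n\sum_{k=0}^{n-1}\log|\cos\pi2^kx|,$$ whenever it exists, takes only one of the three values $0$, $-\log2$, $-\infty$: it equals $0$ at $x=0$, it equals $-\infty$ at the dyadic rationals $x=\frac{2k+1}{2^m}$, and otherwise it can only be $-\log 2$, which is attained on a set of full Lebesgue measure.
   Context: $\mathbb T=\mathbb R/\mathbb Z$, $Tx=2x\bmod1$, $\mathcal M_T$ the set of $T$-invariant Borel probability measures; convention $\log0=-\infty$. *)

theory Defs
  imports "HOL-Probability.Probability"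
begin

text \<open>The circle T = R/Z is represented by the fundamental domain [0,1) with its Borel
  sigma-algebra; the doubling map is x \<mapsto> 2x mod 1.\<close>

definition circle_borel :: "real measure" where
  "circle_borel = restrict_space borel {0..<1}"

definition doubling :: "real \<Rightarrow> real" where
  "doubling x = frac (2 * x)"

definition invariant_measures :: "real measure set" where
  "invariant_measures = {\<mu>. sets \<mu> = sets circle_borel \<and> prob_space \<mu> \<and>
     (\<forall>A \<in> sets \<mu>. emeasure \<mu> (doubling -` A \<inter> space \<mu>) = emeasure \<mu> A)}"

definition f0 :: "real \<Rightarrow> ereal" where
  "f0 x = (if cos (pi * x) = 0 then -\<infinity> else ereal (ln \<bar>cos (pi * x)\<bar>))"

text \<open>Integral of the nonpositive function f_0 against \<mu>, a value in [-infinity, 0].\<close>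
definition int_f0 :: "real measure \<Rightarrow> ereal" where
  "int_f0 \<mu> = - enn2ereal (\<integral>\<^sup>+ x. e2ennreal (- f0 x) \<partial>\<mu>)"

definition birkhoff_avg :: "nat \<Rightarrow> real \<Rightarrow> ereal" where
  "birkhoff_avg n x = ereal (1 / real n) * (\<Sum>k<n. f0 (2 ^ k * x))"

definition dyadic_odd :: "real \<Rightarrow> bool" where
  "dyadic_odd x \<longleftrightarrow> (\<exists>(k::int) (m::nat). m \<ge> 1 \<and> x = real_of_int (2 * k + 1) / 2 ^ m)"

end

theory Submission
  imports Defs "HOL-Analysis.Analysis"
begin


lemma sin_double_pow: "sin (pi * (2 ^ Suc n * x)) = 2 * sin (pi * (2 ^ n * x)) * cos (pi * (2 ^ n * x))"
proof -
  have "pi * (2 ^ Suc n * x) = 2 * (pi * (2 ^ n * x))" by simp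
  then show ?thesis by (metis sin_double)
qed

lemma abs_cos_int_pi: "\<bar>cos (of_int i * pi)\<bar> = 1"
proof -
  have s0: "sin (of_int i * pi) = 0" by (simp add: sin_times_pi_eq_0)
  then have "(cos (of_int i * pi))^2 = 1" using sin_cos_squared_add[of "of_int i * pi"] by simp
  then show ?thesis using power2_eq_1_iff by fastforce
qed

lemma abs_sin_add_int_pi: "\<bar>sin (y + of_int i * pi)\<bar> = \<bar>sin y\<bar>"
proof -
  have s0: "sin (of_int i * pi) = 0" by (simp add: sin_times_pi_eq_0)
  show ?thesis by (simp add: sin_add s0 abs_mult abs_cos_int_pi)
qed

lemma lin_aux: "a*6 \<le> (b::real) \<Longrightarrow> y - s \<le> a \<Longrightarrow> y - b/6 \<le> s" by linarith

lemma abs_sin_ge: assumes "\<bar>u\<bar> \<le> 1/2" shows "\<bar>u\<bar> \<le> \<bar>sin (pi * u)\<bar>"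
proof -
  have key: "v \<le> sin (pi * v)" if "0 \<le> v" "v \<le> 1/2" for v :: real
  proof -
    define y where "y = pi * v"
    have y0: "0 \<le> y" using that by (simp add: y_def)
    have "y \<le> pi / 2" using that by (simp add: y_def)
    then have y2: "y \<le> 2" using pi_less_4 by linarith
    have "\<bar>sin y - (\<Sum>m<3. sin_coeff m * y ^ m)\<bar> \<le> inverse (fact 3) * \<bar>y\<bar> ^ 3"
      by (rule Maclaurin_sin_bound)
    moreover have "(\<Sum>m<3. sin_coeff m * y ^ m) = y"
      by (simp add: sin_coeff_def numeral_3_eq_3)
    moreover have "inverse (fact 3) * \<bar>y\<bar> ^ 3 = y^3/6"
    proof -
      have "fact 3 = (6::real)" by (simp add: numeral_3_eq_3)
      then show ?thesis using y0 by simp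
    qed
    ultimately have a: "\<bar>sin y - y\<bar> * 6 \<le> y^3" by simp
    have b: "y - sin y \<le> \<bar>sin y - y\<bar>" by (rule order_trans[OF _ abs_ge_minus_self]) simp
    have c: "y - y^3/6 \<le> sin y" by (rule lin_aux[OF a b])
    moreover have "y^3 \<le> 4 * y"
    proof -
      have "y * y \<le> 2 * 2" using y0 y2 by (intro mult_mono) auto
      then have "y * (y * y) \<le> y * 4" using y0 by (intro mult_left_mono) auto
      then show ?thesis by (simp add: power3_eq_cube mult.commute)
    qed
    ultimately have "y / 3 \<le> sin y" by linarith
    moreover have "3 * v \<le> pi * v" using pi_gt3 that by (intro mult_right_mono) auto
    then have "v \<le> y / 3" by (simp add: y_def)
    ultimately show ?thesis by (simp add: y_def)
  qed
  show ?thesis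
  proof (cases "0 \<le> u")
    case True then show ?thesis using key[of u] assms by auto
  next
    case False then show ?thesis using key[of "-u"] assms by auto
  qed
qed


lemma f0_ne_pinf: "f0 x \<noteq> \<infinity>"
  by (simp add: f0_def)

lemma f0_le0: "f0 x \<le> 0"
  by (simp add: f0_def)

lemma sin_pow_nz_mono: "sin (pi * (2 ^ n * x)) \<noteq> 0 \<Longrightarrow> k \<le> n \<Longrightarrow> sin (pi * (2 ^ k * x)) \<noteq> 0"
proof (induction n)
  case 0 then show ?case by simp
next
  case (Suc n)
  then have "sin (pi * (2 ^ n * x)) \<noteq> 0" unfolding sin_double_pow by simp
  with Suc show ?case by (cases "k = Suc n") auto
qed

lemma cos_pow_nz: "sin (pi * (2 ^ n * x)) \<noteq> 0 \<Longrightarrow> k < n \<Longrightarrow> cos (pi * (2 ^ k * x)) \<noteq> 0"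
  using sin_pow_nz_mono[of n x "Suc k"] unfolding sin_double_pow by simp

lemma sum_formula:
  "sin (pi * (2 ^ n * x)) \<noteq> 0 \<Longrightarrow>
   (\<Sum>k<n. f0 (2 ^ k * x)) = ereal (ln (\<bar>sin (pi * (2 ^ n * x))\<bar>) - ln (\<bar>sin (pi * x)\<bar>) - real n * ln 2)"
proof (induction n)
  case 0 then show ?case by simp
next
  case (Suc n)
  have s: "sin (pi * (2 ^ n * x)) \<noteq> 0" using Suc.prems unfolding sin_double_pow by simp
  have c: "cos (pi * (2 ^ n * x)) \<noteq> 0" using Suc.prems unfolding sin_double_pow by simp
  have L: "ln (\<bar>sin (pi * (2 ^ Suc n * x))\<bar>) = ln 2 + ln (\<bar>sin (pi * (2 ^ n * x))\<bar>) + ln (\<bar>cos (pi * (2 ^ n * x))\<bar>)"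
    unfolding sin_double_pow using s c by (simp add: abs_mult ln_mult)
  have "(\<Sum>k<Suc n. f0 (2 ^ k * x)) = (\<Sum>k<n. f0 (2 ^ k * x)) + f0 (2 ^ n * x)"
    by (rule sum.lessThan_Suc)
  also have "\<dots> = ereal (ln (\<bar>sin (pi * (2 ^ n * x))\<bar>) - ln (\<bar>sin (pi * x)\<bar>) - real n * ln 2) + ereal (ln (\<bar>cos (pi * (2 ^ n * x))\<bar>))"
    using Suc.IH[OF s] c by (simp add: f0_def)
  also have "\<dots> = ereal (ln (\<bar>sin (pi * (2 ^ Suc n * x))\<bar>) - ln (\<bar>sin (pi * x)\<bar>) - real (Suc n) * ln 2)"
    unfolding L by (simp add: algebra_simps)
  finally show ?case .
qed

lemma dyadic_aux: "0 < x \<Longrightarrow> x < 1 \<Longrightarrow> 2 ^ n * x = of_int i \<Longrightarrow> dyadic_odd x"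
proof (induction n arbitrary: i)
  case 0
  then have "(0::real) < of_int i" "of_int i < (1::real)" by auto
  then have "0 < i" "i < 1" by simp_all
  then show ?case by simp
next
  case (Suc n)
  show ?case
  proof (cases "even i")
    case True
    then obtain j where "i = 2 * j" by blast
    then have "2 ^ n * x = of_int j" using Suc.prems by simp
    then show ?thesis using Suc by blast
  next
    case False
    then obtain j where j: "i = 2 * j + 1" by (metis oddE)
    have "x = real_of_int (2 * j + 1) / 2 ^ Suc n"
      using Suc.prems j by (simp add: field_simps)
    then show ?thesis unfolding dyadic_odd_def by (intro exI[of _ j] exI[of _ "Suc n"]) simp
  qed
qed

lemma nondyadic_sin_nz:
  assumes "x \<in> {0..<1}" "x \<noteq> 0" "\<not> dyadic_odd x"
  shows "sin (pi * (2 ^ n * x)) \<noteq> 0"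
proof
  assume "sin (pi * (2 ^ n * x)) = 0"
  then have "2 ^ n * x \<in> \<int>" using sin_times_pi_eq_0[of "2 ^ n * x"] by (simp add: mult.commute)
  then obtain i where "2 ^ n * x = of_int i" by (auto elim: Ints_cases)
  then have "dyadic_odd x" using assms by (intro dyadic_aux[of x n i]) auto
  with assms show False by simp
qed

lemma dyadic_cos0:
  assumes "dyadic_odd x"
  shows "\<exists>m. cos (pi * (2 ^ m * x)) = 0"
proof -
  obtain k :: int and m :: nat where m: "m \<ge> 1" "x = real_of_int (2 * k + 1) / 2 ^ m"
    using assms unfolding dyadic_odd_def by blast
  then obtain m' where m': "m = Suc m'" by (cases m) auto
  have "pi * (2 ^ m' * x) = of_int (2 * k + 1) * (pi / 2)"
    using m m' by (simp add: field_simps)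
  then have "cos (pi * (2 ^ m' * x)) = 0" by (subst cos_zero_iff_int) (intro exI[of _ "2*k+1"], simp)
  then show ?thesis by blast
qed


lemma seq_limit_aux:
  fixes s :: "nat \<Rightarrow> real" and L :: ereal
  assumes pos: "\<And>n. 0 < s n" and le1: "\<And>n. s n \<le> 1"
    and grow: "\<And>n. s n < 1/2 \<Longrightarrow> s n \<le> s (Suc n)"
    and lim: "(\<lambda>n. ereal ((ln (s n) - ln (s 0)) / real n - ln 2)) \<longlonglongrightarrow> L"
  shows "L = - ereal (ln 2)"
proof -
  define c where "c = - ln (s 0)"
  have up: "(\<lambda>n. ereal (- ln 2 + c / real n)) \<longlonglongrightarrow> ereal (- ln 2)"
    unfolding lim_ereal by (auto intro!: tendsto_eq_intros lim_const_over_n)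
  have "L \<le> ereal (- ln 2)"
  proof (rule LIMSEQ_le[OF lim up], intro exI[of _ 1] allI impI)
    fix n :: nat assume n: "1 \<le> n"
    have "ln (s n) \<le> 0" using pos[of n] le1[of n] by simp
    then have "(ln (s n) - ln (s 0)) / real n \<le> c / real n"
      using n unfolding c_def by (intro divide_right_mono) auto
    then show "ereal ((ln (s n) - ln (s 0)) / real n - ln 2) \<le> ereal (- ln 2 + c / real n)"
      by simp
  qed
  moreover have "\<not> L < ereal (- ln 2)"
  proof
    assume "L < ereal (- ln 2)"
    then obtain r where r: "L < ereal r" "ereal r < ereal (- ln 2)" using ereal_dense2 by blast
    then have rl: "r + ln 2 < 0" by simp
    define q where "q = exp (r + ln 2)"
    have q: "0 < q" "q < 1" using rl by (auto simp: q_def)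
    have ev: "eventually (\<lambda>n. ereal ((ln (s n) - ln (s 0)) / real n - ln 2) < ereal r) sequentially"
      using order_tendstoD(2)[OF lim r(1)] .
    have ev2: "eventually (\<lambda>n. s n \<le> s 0 * q ^ n) sequentially"
      using ev eventually_gt_at_top[of 0]
    proof eventually_elim
      case (elim n)
      then have "(ln (s n) - ln (s 0)) / real n < r + ln 2" by simp
      then have "ln (s n) - ln (s 0) < real n * (r + ln 2)"
        using elim by (simp add: divide_less_eq mult.commute)
      then have "ln (s n) < ln (s 0) + real n * (r + ln 2)" by simp
      then have "s n < exp (ln (s 0) + real n * (r + ln 2))"
        using pos[of n] by (metis exp_less_cancel_iff exp_ln)
      also have "\<dots> = s 0 * q ^ n"
      proof -
        have "exp (real n * (r + ln 2)) = q ^ n" unfolding q_def by (rule exp_of_nat_mult)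
        then show ?thesis using pos[of 0] by (simp only: exp_add exp_ln)
      qed
      finally show ?case by simp
    qed
    have "s \<longlonglongrightarrow> 0"
    proof (rule tendsto_sandwich[of "\<lambda>_. 0" _ _ "\<lambda>n. s 0 * q ^ n"])
      show "eventually (\<lambda>n. 0 \<le> s n) sequentially" using pos by (simp add: less_imp_le)
      show "eventually (\<lambda>n. s n \<le> s 0 * q ^ n) sequentially" by (rule ev2)
      show "(\<lambda>n. 0) \<longlonglongrightarrow> (0::real)" by simp
      have "(\<lambda>n. q ^ n) \<longlonglongrightarrow> 0" using q by (intro LIMSEQ_power_zero) simp
      then show "(\<lambda>n. s 0 * q ^ n) \<longlonglongrightarrow> 0" using tendsto_mult_right_zero by blast
    qed
    then have "eventually (\<lambda>n. s n < 1/2) sequentially"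
      by (rule order_tendstoD(2)) simp
    then obtain N where N: "\<And>n. n \<ge> N \<Longrightarrow> s n < 1/2" by (auto simp: eventually_sequentially)
    have mono: "s N \<le> s n" if "n \<ge> N" for n
      using that
    proof (induction n rule: dec_induct)
      case base then show ?case by simp
    next
      case (step m)
      then show ?case using grow[of m] N[of m] by simp
    qed
    have "eventually (\<lambda>n. s n < s N) sequentially"
      using \<open>s \<longlonglongrightarrow> 0\<close> pos[of N] by (rule order_tendstoD(2))
    then obtain M where "\<And>n. n \<ge> M \<Longrightarrow> s n < s N" by (auto simp: eventually_sequentially)
    then have "s (max M N) < s N" by simp
    moreover have "s N \<le> s (max M N)" by (rule mono) simp
    ultimately show False by simp
  qed
  ultimately show ?thesis by (simp add: not_less antisym)
qed

lemma grow_step: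
  fixes t :: real
  assumes "\<bar>sin t\<bar> < 1/2"
  shows "\<bar>sin t\<bar> \<le> \<bar>2 * sin t * cos t\<bar>"
proof -
  have "1/2 \<le> \<bar>cos t\<bar>"
  proof (rule ccontr)
    assume "\<not> 1/2 \<le> \<bar>cos t\<bar>"
    then have "\<bar>cos t\<bar>^2 < (1/2)^2" by (intro power_strict_mono) auto
    moreover have "\<bar>sin t\<bar>^2 < (1/2)^2" using assms by (intro power_strict_mono) auto
    ultimately have "(cos t)^2 * 4 < 1" "(sin t)^2 * 4 < 1" unfolding power2_abs by (simp_all add: power_divide)
    then show False using sin_cos_squared_add[of t] by linarith
  qed
  then have "\<bar>sin t\<bar> * 1 \<le> \<bar>sin t\<bar> * (2 * \<bar>cos t\<bar>)" by (intro mult_left_mono) auto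
  then show ?thesis by (simp add: abs_mult)
qed

lemma birk_eq:
  assumes "sin (pi * (2 ^ n * x)) \<noteq> 0" "n \<ge> 1"
  shows "birkhoff_avg n x = ereal ((ln (\<bar>sin (pi * (2 ^ n * x))\<bar>) - ln (\<bar>sin (pi * (2 ^ 0 * x))\<bar>)) / real n - ln 2)"
proof -
  have "birkhoff_avg n x = ereal (1 / real n) * ereal (ln (\<bar>sin (pi * (2 ^ n * x))\<bar>) - ln (\<bar>sin (pi * x)\<bar>) - real n * ln 2)"
    unfolding birkhoff_avg_def using sum_formula[OF assms(1)] by simp
  also have "\<dots> = ereal ((ln (\<bar>sin (pi * (2 ^ n * x))\<bar>) - ln (\<bar>sin (pi * (2 ^ 0 * x))\<bar>)) / real n - ln 2)"
    using assms(2) by (simp add: field_simps)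
  finally show ?thesis .
qed

lemma conj_zero: "(\<lambda>n. birkhoff_avg n 0) \<longlonglongrightarrow> 0"
proof -
  have "f0 0 = 0" by (simp add: f0_def zero_ereal_def)
  then have "birkhoff_avg n 0 = 0" for n by (simp add: birkhoff_avg_def)
  then show ?thesis by simp
qed

lemma conj_dyadic:
  assumes "dyadic_odd x"
  shows "(\<lambda>n. birkhoff_avg n x) \<longlonglongrightarrow> -\<infinity>"
proof -
  obtain m where m: "cos (pi * (2 ^ m * x)) = 0" using dyadic_cos0[OF assms] by blast
  have "birkhoff_avg n x = -\<infinity>" if "n > m" for n
  proof -
    have "\<bar>\<Sum>k<n. f0 (2 ^ k * x)\<bar> = \<infinity>"
      unfolding sum_Inf using that m by (intro conjI bexI[of _ m]) (auto simp: f0_def)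
    moreover have "(\<Sum>k<n. f0 (2 ^ k * x)) \<noteq> \<infinity>"
      unfolding sum_Pinfty using f0_ne_pinf by auto
    ultimately have "(\<Sum>k<n. f0 (2 ^ k * x)) = -\<infinity>" by (cases "(\<Sum>k<n. f0 (2 ^ k * x))") auto
    then show ?thesis using that by (simp add: birkhoff_avg_def)
  qed
  then show ?thesis
    by (intro tendsto_eventually) (auto simp: eventually_sequentially intro!: exI[of _ "Suc m"])
qed

lemma conj_nondyadic:
  assumes "x \<in> {0..<1}" "x \<noteq> 0" "\<not> dyadic_odd x"
    and lim: "(\<lambda>n. birkhoff_avg n x) \<longlonglongrightarrow> L"
  shows "L = - ereal (ln 2)"
proof -
  define s where "s n = \<bar>sin (pi * (2 ^ n * x))\<bar>" for n
  have nz: "sin (pi * (2 ^ n * x)) \<noteq> 0" for n using nondyadic_sin_nz[OF assms(1-3)] .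
  show ?thesis
  proof (rule seq_limit_aux[of s])
    show "0 < s n" for n using nz[of n] by (simp add: s_def)
    show "s n \<le> 1" for n by (simp add: s_def)
    show "s n \<le> s (Suc n)" if "s n < 1/2" for n
      using grow_step[of "pi * (2 ^ n * x)"] that unfolding s_def sin_double_pow by simp
    have "eventually (\<lambda>n. birkhoff_avg n x = ereal ((ln (s n) - ln (s 0)) / real n - ln 2)) sequentially"
      unfolding eventually_sequentially s_def using birk_eq nz by (intro exI[of _ 1]) auto
    then show "(\<lambda>n. ereal ((ln (s n) - ln (s 0)) / real n - ln 2)) \<longlonglongrightarrow> L"
      using lim by (rule Lim_transform_eventually[rotated])
  qed
qed


definition dl :: "nat \<Rightarrow> nat \<Rightarrow> real" where
  "dl j n = exp (- real n / (real j + 1))"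

definition BA :: "nat \<Rightarrow> nat \<Rightarrow> real set" where
  "BA j n = {x. x \<in> {0..<1} \<and> \<bar>sin (pi * (2 ^ n * x))\<bar> < dl j n}"

lemma BA_sets: "BA j n \<in> sets lborel"
proof -
  have "BA j n = {0..<1} \<inter> {x. \<bar>sin (pi * (2 ^ n * x))\<bar> < dl j n}"
    by (auto simp: BA_def)
  moreover have "open {x::real. \<bar>sin (pi * (2 ^ n * x))\<bar> < dl j n}"
    by (intro open_Collect_less continuous_intros)
  ultimately show ?thesis by auto
qed

lemma BA_subset:
  "BA j n \<subseteq> (\<Union>i\<in>{0..(2::nat)^n}. {(real i - dl j n) / 2 ^ n <..< (real i + dl j n) / 2 ^ n})"
proof
  fix x assume x: "x \<in> BA j n"
  define t where "t = 2 ^ n * x"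
  have t0: "0 \<le> t" using x by (simp add: BA_def t_def)
  have t1: "t \<le> 2 ^ n" using x by (simp add: BA_def t_def)
  have r0: "0 \<le> round t" using round_mono[OF t0] by simp
  have r1: "round t \<le> 2 ^ n"
  proof -
    have "round t \<le> round (real (2 ^ n))" using t1 by (intro round_mono) simp
    then show ?thesis by (simp only: round_of_nat) simp
  qed
  define i where "i = nat (round t)"
  have ii: "real i = of_int (round t)" using r0 by (simp add: i_def)
  have iin: "i \<in> {0..2^n}" using r1 r0 unfolding i_def by (simp add: nat_le_iff)
  define u where "u = t - real i"
  have u: "\<bar>u\<bar> \<le> 1/2" unfolding u_def ii using of_int_round_abs_le[of t] by (simp add: abs_minus_commute)
  have "\<bar>sin (pi * t)\<bar> = \<bar>sin (pi * u + of_int (round t) * pi)\<bar>"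
    by (simp add: u_def ii algebra_simps)
  also have "\<dots> = \<bar>sin (pi * u)\<bar>" by (rule abs_sin_add_int_pi)
  finally have st: "\<bar>sin (pi * t)\<bar> = \<bar>sin (pi * u)\<bar>" .
  have "\<bar>sin (pi * t)\<bar> < dl j n" using x unfolding BA_def t_def by simp
  then have "\<bar>u\<bar> < dl j n" using abs_sin_ge[OF u] st by linarith
  then have a1: "real i - dl j n < 2 ^ n * x" and a2: "2 ^ n * x < real i + dl j n" unfolding u_def t_def by auto
  have "(real i - dl j n) / 2 ^ n < x" using a1 by (subst pos_divide_less_eq) (auto simp: mult.commute)
  moreover have "x < (real i + dl j n) / 2 ^ n" using a2 by (subst pos_less_divide_eq) (auto simp: mult.commute)
  ultimately have "x \<in> {(real i - dl j n) / 2 ^ n <..< (real i + dl j n) / 2 ^ n}" by simp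
  then show "x \<in> (\<Union>i\<in>{0..(2::nat)^n}. {(real i - dl j n) / 2 ^ n <..< (real i + dl j n) / 2 ^ n})"
    using iin by (intro UN_I[of i]) auto
qed

lemma BA_measure: "emeasure lborel (BA j n) \<le> ennreal (4 * dl j n)"
proof -
  have dpos: "0 < dl j n" by (simp add: dl_def)
  let ?I = "\<lambda>i::nat. {(real i - dl j n) / 2 ^ n <..< (real i + dl j n) / 2 ^ n}"
  have "emeasure lborel (BA j n) \<le> emeasure lborel (\<Union>i\<in>{0..(2::nat)^n}. ?I i)"
    by (rule emeasure_mono[OF BA_subset]) simp
  also have "\<dots> \<le> (\<Sum>i\<in>{0..(2::nat)^n}. emeasure lborel (?I i))"
    by (rule emeasure_subadditive_finite) auto
  also have "\<dots> = (\<Sum>i\<in>{0..(2::nat)^n}. ennreal (2 * dl j n / 2 ^ n))"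
  proof (rule sum.cong[OF refl])
    fix i assume "i \<in> {0..(2::nat)^n}"
    have "(real i - dl j n) / 2 ^ n \<le> (real i + dl j n) / 2 ^ n" using dpos by (simp add: divide_right_mono)
    then show "emeasure lborel (?I i) = ennreal (2 * dl j n / 2 ^ n)"
      by (simp add: diff_divide_distrib[symmetric])
  qed
  also have "\<dots> = of_nat (2 ^ n + 1) * ennreal (2 * dl j n / 2 ^ n)"
    by simp
  also have "\<dots> = ennreal (real (2 ^ n + 1) * (2 * dl j n / 2 ^ n))"
    using dpos by (subst ennreal_mult) (auto simp: ennreal_of_nat_eq_real_of_nat)
  also have "\<dots> \<le> ennreal (4 * dl j n)"
  proof (rule ennreal_leI)
    have "real (2 ^ n + 1) = 2 ^ n + 1" by simp
    moreover have "(1::real) \<le> 2 ^ n" by simp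
    ultimately have "real (2 ^ n + 1) \<le> 2 * 2 ^ n" by linarith
    then have "real (2 ^ n + 1) * (2 * dl j n) \<le> (2 * 2 ^ n) * (2 * dl j n)"
      using dpos by (intro mult_right_mono) auto
    then show "real (2 ^ n + 1) * (2 * dl j n / 2 ^ n) \<le> 4 * dl j n"
      by (simp add: field_simps)
  qed
  finally show ?thesis .
qed

lemma BA_AE: "AE x in lborel. eventually (\<lambda>n. x \<in> space lborel - BA j n) sequentially"
proof (rule borel_cantelli_AE1)
  show "BA j n \<in> sets lborel" for n by (rule BA_sets)
  show "emeasure lborel (BA j n) < \<infinity>" for n
    using BA_measure[of j n] by (simp add: le_less_trans)
  define q where "q = exp (- 1 / (real j + 1))"
  have q: "0 < q" "q < 1" by (auto simp: q_def)
  have dq: "dl j n = q ^ n" for n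
    unfolding dl_def q_def exp_of_nat_mult[symmetric] by (simp add: field_simps)
  have "summable (\<lambda>n. 4 * q ^ n)" using q by (intro summable_mult summable_geometric) simp
  then show "summable (\<lambda>n. measure lborel (BA j n))"
  proof (rule summable_comparison_test')
    fix n
    have ne: "emeasure lborel (BA j n) \<noteq> top"
      by (rule neq_top_trans[OF ennreal_neq_top BA_measure])
    have "ennreal (measure lborel (BA j n)) \<le> ennreal (4 * dl j n)"
      using BA_measure[of j n] unfolding emeasure_eq_ennreal_measure[OF ne] .
    then have "measure lborel (BA j n) \<le> 4 * dl j n"
      using dq q by (subst (asm) ennreal_le_iff) auto
    then show "norm (measure lborel (BA j n)) \<le> 4 * q ^ n" by (simp add: dq)
  qed
qed

lemma good_point:
  assumes ev: "\<And>j. eventually (\<lambda>n. x \<notin> BA j n) sequentially" and x: "x \<in> {0..<1}"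
  shows "(\<lambda>n. birkhoff_avg n x) \<longlonglongrightarrow> - ereal (ln 2)"
proof -
  define s where "s n = \<bar>sin (pi * (2 ^ n * x))\<bar>" for n
  have evs: "eventually (\<lambda>n. dl j n \<le> s n) sequentially" for j
    using ev[of j] by (rule eventually_mono) (use x in \<open>simp add: BA_def s_def not_less\<close>)
  have nz: "sin (pi * (2 ^ n * x)) \<noteq> 0" for n
  proof -
    obtain N where N: "\<And>m. m \<ge> N \<Longrightarrow> dl 0 m \<le> s m" using evs[of 0] by (auto simp: eventually_sequentially)
    have "0 < dl 0 (max n N)" by (simp add: dl_def)
    moreover have "dl 0 (max n N) \<le> s (max n N)" by (rule N) simp
    ultimately have "0 < s (max n N)" by linarith
    then have "sin (pi * (2 ^ max n N * x)) \<noteq> 0" by (simp add: s_def)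
    then show ?thesis by (rule sin_pow_nz_mono) simp
  qed
  have spos: "0 < s n" for n using nz[of n] by (simp add: s_def)
  have lim1: "(\<lambda>n. ln (s n) / real n) \<longlonglongrightarrow> 0"
  proof (rule LIMSEQ_I)
    fix r :: real assume r: "0 < r"
    obtain j where j: "inverse (real (Suc j)) < r" using reals_Archimedean[OF r] by blast
    obtain N where N: "\<And>m. m \<ge> N \<Longrightarrow> dl j m \<le> s m" using evs[of j] by (auto simp: eventually_sequentially)
    show "\<exists>no. \<forall>n\<ge>no. norm (ln (s n) / real n - 0) < r"
    proof (intro exI[of _ "max N 1"] allI impI)
      fix n assume n: "max N 1 \<le> n"
      then have n1: "0 < real n" by simp
      have "ln (dl j n) \<le> ln (s n)" using N[of n] n spos[of n] by (subst ln_le_cancel_iff) (auto simp: dl_def)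
      then have lo: "- real n / (real j + 1) \<le> ln (s n)" by (simp add: dl_def)
      have hi: "ln (s n) \<le> 0" using spos[of n] by (simp add: s_def)
      have "- (1 / (real j + 1)) \<le> ln (s n) / real n"
        using lo n1 by (simp add: field_simps)
      moreover have "ln (s n) / real n \<le> 0" using hi n1 by (simp add: divide_nonpos_pos)
      moreover have "1 / (real j + 1) < r" using j by (simp add: inverse_eq_divide add.commute)
      ultimately show "norm (ln (s n) / real n - 0) < r" by simp
    qed
  qed
  have lim2: "(\<lambda>n. (ln (s n) - ln (s 0)) / real n - ln 2) \<longlonglongrightarrow> 0 - 0 - ln 2"
    unfolding diff_divide_distrib by (intro tendsto_diff lim1 lim_const_over_n tendsto_const)
  have "(\<lambda>n. ereal ((ln (s n) - ln (s 0)) / real n - ln 2)) \<longlonglongrightarrow> - ereal (ln 2)"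
    using lim2 by (simp add: lim_ereal[symmetric] del: lim_ereal)
  moreover have "eventually (\<lambda>n. ereal ((ln (s n) - ln (s 0)) / real n - ln 2) = birkhoff_avg n x) sequentially"
    unfolding eventually_sequentially s_def using birk_eq nz by (intro exI[of _ 1]) auto
  ultimately show ?thesis by (rule Lim_transform_eventually)
qed

lemma conj_AE: "AE x in lborel. x \<in> {0..<1} \<longrightarrow> (\<lambda>n. birkhoff_avg n x) \<longlonglongrightarrow> - ereal (ln 2)"
proof -
  have "AE x in lborel. \<forall>j. eventually (\<lambda>n. x \<in> space lborel - BA j n) sequentially"
    using BA_AE by (subst AE_all_countable) blast
  then show ?thesis
  proof (rule AE_mp[OF _ AE_I2], intro impI)
    fix x assume "\<forall>j. eventually (\<lambda>n. x \<in> space lborel - BA j n) sequentially" "x \<in> {0..<1}"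
    then show "(\<lambda>n. birkhoff_avg n x) \<longlonglongrightarrow> - ereal (ln 2)"
      by (intro good_point) (auto elim: eventually_mono)
  qed
qed


lemma doubling_borel: "doubling \<in> borel_measurable borel"
proof -
  have "doubling = (\<lambda>x. 2 * x - real_of_int \<lfloor>2 * x\<rfloor>)"
    by (auto simp: doubling_def frac_def)
  also have "\<dots> \<in> borel_measurable borel" by measurable
  finally show ?thesis .
qed

lemma doubling_range: "doubling x \<in> {0..<1}"
  by (simp add: doubling_def frac_lt_1)

lemma space_circle: "space circle_borel = {0..<1}"
  by (simp add: circle_borel_def space_restrict_space)

lemma doubling_meas: "doubling \<in> circle_borel \<rightarrow>\<^sub>M circle_borel"
  unfolding circle_borel_def
  by (rule measurable_restrict_space3[OF doubling_borel]) (use doubling_range in blast)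

lemma f0_borel: "f0 \<in> borel_measurable borel"
  unfolding f0_def by measurable

lemma f0_meas: "(\<lambda>x. e2ennreal (- f0 x)) \<in> borel_measurable circle_borel"
  unfolding circle_borel_def by (intro measurable_restrict_space1) (use f0_borel in measurable)

definition gm :: "nat \<Rightarrow> real \<Rightarrow> real" where
  "gm m x = (if sin (pi * x) = 0 then - real m else max (ln \<bar>sin (pi * x)\<bar>) (- real m))"

lemma gm_borel: "gm m \<in> borel_measurable borel"
  unfolding gm_def by measurable

lemma gm_circle: "gm m \<in> borel_measurable circle_borel"
  unfolding circle_borel_def by (rule measurable_restrict_space1[OF gm_borel])

lemma gm_bounds: "- real m \<le> gm m x" "gm m x \<le> 0"
proof -
  show "- real m \<le> gm m x" by (simp add: gm_def)
  have "ln \<bar>sin (pi * x)\<bar> \<le> 0" if "sin (pi * x) \<noteq> 0" using that by simp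
  then show "gm m x \<le> 0" by (auto simp: gm_def)
qed

lemma abs_sin_doubling: "\<bar>sin (pi * doubling x)\<bar> = 2 * \<bar>sin (pi * x)\<bar> * \<bar>cos (pi * x)\<bar>"
proof -
  have "pi * doubling x = 2 * (pi * x) + of_int (- \<lfloor>2 * x\<rfloor>) * pi"
    by (simp add: doubling_def frac_def algebra_simps)
  then have "\<bar>sin (pi * doubling x)\<bar> = \<bar>sin (2 * (pi * x))\<bar>"
    by (simp only: abs_sin_add_int_pi)
  then show ?thesis by (simp add: sin_double abs_mult)
qed

lemma gm_step: "gm m (doubling x) \<le> gm m x + ln 2"
proof (cases "sin (pi * x) = 0")
  case True
  then have "sin (pi * doubling x) = 0" using abs_sin_doubling[of x] by simp
  then show ?thesis using True by (simp add: gm_def)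
next
  case False
  show ?thesis
  proof (cases "sin (pi * doubling x) = 0")
    case True
    have "gm m (doubling x) = - real m" using True by (simp add: gm_def)
    moreover have "- real m \<le> gm m x" by (rule gm_bounds)
    moreover have "0 \<le> ln (2::real)" by simp
    ultimately show ?thesis by linarith
  next
    case F2: False
    have "\<bar>sin (pi * doubling x)\<bar> \<le> 2 * \<bar>sin (pi * x)\<bar>"
      unfolding abs_sin_doubling using abs_cos_le_one[of "pi * x"]
      by (simp add: mult_left_le)
    then have "ln \<bar>sin (pi * doubling x)\<bar> \<le> ln (2 * \<bar>sin (pi * x)\<bar>)"
      using F2 by (subst ln_le_cancel_iff) auto
    also have "\<dots> = ln 2 + ln \<bar>sin (pi * x)\<bar>" using False by (simp add: ln_mult)
    finally have a: "ln \<bar>sin (pi * doubling x)\<bar> \<le> ln 2 + ln \<bar>sin (pi * x)\<bar>" .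
    have "0 \<le> ln (2::real)" by simp
    then have "max (ln \<bar>sin (pi * doubling x)\<bar>) (- real m) \<le> max (ln \<bar>sin (pi * x)\<bar>) (- real m) + ln 2"
      using a by linarith
    then show ?thesis using False F2 by (simp add: gm_def)
  qed
qed


definition hm :: "nat \<Rightarrow> real \<Rightarrow> real" where
  "hm m x = ln 2 - gm m (doubling x) + gm m x"

lemma eventually_gm:
  assumes "sin (pi * y) \<noteq> 0"
  shows "eventually (\<lambda>m. gm m y = ln \<bar>sin (pi * y)\<bar>) sequentially"
proof -
  obtain N where N: "- ln \<bar>sin (pi * y)\<bar> \<le> real N" using real_arch_simple by blast
  show ?thesis unfolding eventually_sequentially
  proof (intro exI[of _ N] allI impI)
    fix m assume "N \<le> m"
    then have "- real m \<le> ln \<bar>sin (pi * y)\<bar>" using N by linarith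
    then show "gm m y = ln \<bar>sin (pi * y)\<bar>" using assms by (simp add: gm_def max_def)
  qed
qed

lemma ennreal_top_of_bounds:
  assumes "\<And>K. ennreal K \<le> y" shows "y = top"
proof (rule ccontr)
  assume "y \<noteq> top"
  then obtain r where r: "y = ennreal r" "0 \<le> r" by (cases y rule: ennreal_cases) auto
  have "ennreal (r + 1) \<le> ennreal r" using assms[of "r + 1"] r by simp
  then have "r + 1 \<le> r" using r by (subst (asm) ennreal_le_iff) auto
  then show False by simp
qed

lemma pointwise_liminf:
  "e2ennreal (- f0 x) \<le> liminf (\<lambda>m. ennreal (hm m x))"
proof (cases "cos (pi * x) = 0")
  case True
  then have s2: "(sin (pi * x))^2 = 1" using sin_cos_squared_add[of "pi * x"] by simp
  then have s1: "\<bar>sin (pi * x)\<bar> = 1" using abs_sin_le_one[of "pi * x"]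
    by (metis abs_power2 abs_sin_le_one power2_eq_1_iff abs_1 abs_minus_cancel abs_neg_one)
  then have sx: "sin (pi * x) \<noteq> 0" by auto
  have gx: "gm m x = 0" for m using s1 sx by (simp add: gm_def)
  have "sin (pi * doubling x) = 0" using abs_sin_doubling[of x] True by simp
  then have gd: "gm m (doubling x) = - real m" for m by (simp add: gm_def)
  have hmx: "hm m x = ln 2 + real m" for m by (simp add: hm_def gx gd)
  have "liminf (\<lambda>m. ennreal (hm m x)) = top"
  proof (rule ennreal_top_of_bounds)
    fix K :: real
    obtain N where N: "K \<le> real N" using real_arch_simple by blast
    show "ennreal K \<le> liminf (\<lambda>m. ennreal (hm m x))"
    proof (rule Liminf_bounded)
      show "eventually (\<lambda>m. ennreal K \<le> ennreal (hm m x)) sequentially"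
        unfolding eventually_sequentially hmx
      proof (intro exI[of _ N] allI impI ennreal_leI)
        fix m assume "N \<le> m"
        moreover have "0 \<le> ln (2::real)" by simp
        ultimately show "K \<le> ln 2 + real m" using N by linarith
      qed
    qed
  qed
  then show ?thesis by simp
next
  case False
  then have f: "e2ennreal (- f0 x) = ennreal (- ln \<bar>cos (pi * x)\<bar>)" by (simp add: f0_def)
  show ?thesis
  proof (cases "sin (pi * x) = 0")
    case True
    then have "(cos (pi * x))^2 = 1" using sin_cos_squared_add[of "pi * x"] by simp
    then have "\<bar>cos (pi * x)\<bar> = 1"
      by (metis abs_power2 power2_eq_1_iff abs_1 abs_minus_cancel abs_neg_one)
    then show ?thesis unfolding f by simp
  next
    case sx: False
    have sd: "sin (pi * doubling x) \<noteq> 0" using abs_sin_doubling[of x] sx False by auto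
    have L: "ln \<bar>sin (pi * doubling x)\<bar> = ln 2 + ln \<bar>sin (pi * x)\<bar> + ln \<bar>cos (pi * x)\<bar>"
      unfolding abs_sin_doubling using sx False by (simp add: ln_mult)
    have "eventually (\<lambda>m. ennreal (- ln \<bar>cos (pi * x)\<bar>) \<le> ennreal (hm m x)) sequentially"
      using eventually_gm[OF sx] eventually_gm[OF sd]
    proof eventually_elim
      case (elim m)
      then have "hm m x = - ln \<bar>cos (pi * x)\<bar>" unfolding hm_def L by simp
      then show ?case by simp
    qed
    then show ?thesis unfolding f by (rule Liminf_bounded)
  qed
qed


lemma space_circle': "space circle_borel = {0..<1}" by (rule space_circle)

lemma gm_norm: "norm (gm m x) \<le> real m"
  using gm_bounds[of m x] by (auto simp: abs_le_iff)

lemma inv_props: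
  assumes "\<mu> \<in> invariant_measures"
  shows "sets \<mu> = sets circle_borel" "prob_space \<mu>" "space \<mu> = {0..<1}"
    "doubling \<in> \<mu> \<rightarrow>\<^sub>M \<mu>" "distr \<mu> \<mu> doubling = \<mu>"
proof -
  show s: "sets \<mu> = sets circle_borel" "prob_space \<mu>" using assms by (auto simp: invariant_measures_def)
  show sp: "space \<mu> = {0..<1}" using sets_eq_imp_space_eq[OF s(1)] space_circle by simp
  show m: "doubling \<in> \<mu> \<rightarrow>\<^sub>M \<mu>" using doubling_meas measurable_cong_sets[OF s(1) s(1)] by simp
  show "distr \<mu> \<mu> doubling = \<mu>"
  proof (rule measure_eqI)
    show "sets (distr \<mu> \<mu> doubling) = sets \<mu>" by simp
    fix A assume "A \<in> sets (distr \<mu> \<mu> doubling)"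
    then have A: "A \<in> sets \<mu>" by simp
    have "emeasure (distr \<mu> \<mu> doubling) A = emeasure \<mu> (doubling -` A \<inter> space \<mu>)"
      by (rule emeasure_distr[OF m A])
    also have "\<dots> = emeasure \<mu> A" using assms A by (auto simp: invariant_measures_def)
    finally show "emeasure (distr \<mu> \<mu> doubling) A = emeasure \<mu> A" .
  qed
qed

lemma lower_bound:
  assumes inv: "\<mu> \<in> invariant_measures"
  shows "- ereal (ln 2) \<le> int_f0 \<mu>"
proof -
  note P = inv_props[OF inv]
  interpret prob_space \<mu> by (rule P(2))
  have gmeas[measurable]: "gm m \<in> borel_measurable \<mu>" for m
    using gm_circle measurable_cong_sets[OF P(1) refl] by blast
  have dmeas[measurable]: "doubling \<in> \<mu> \<rightarrow>\<^sub>M \<mu>" by (rule P(4))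
  have gdmeas: "(\<lambda>x. gm m (doubling x)) \<in> borel_measurable \<mu>" for m
    by (rule measurable_compose[OF dmeas gmeas])
  have int_g: "integrable \<mu> (gm m)" for m
  proof (rule integrable_const_bound[where B = "real m"])
    show "AE x in \<mu>. norm (gm m x) \<le> real m"
      by (intro AE_I2 gm_norm)
  qed simp
  have int_gd: "integrable \<mu> (\<lambda>x. gm m (doubling x))" for m
  proof (rule integrable_const_bound[where B = "real m"])
    show "AE x in \<mu>. norm (gm m (doubling x)) \<le> real m"
      by (intro AE_I2 gm_norm)
  qed (rule gdmeas)
  have eqint: "(\<integral>x. gm m (doubling x) \<partial>\<mu>) = (\<integral>x. gm m x \<partial>\<mu>)" for m
  proof -
    have "(\<integral>x. gm m (doubling x) \<partial>\<mu>) = integral\<^sup>L (distr \<mu> \<mu> doubling) (gm m)"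
      by (rule integral_distr[OF dmeas gmeas, symmetric])
    then show ?thesis using P(5) by simp
  qed
  have hint: "integrable \<mu> (hm m)" for m
    unfolding hm_def by (intro Bochner_Integration.integrable_add Bochner_Integration.integrable_diff int_g int_gd) simp
  have hval: "(\<integral>x. hm m x \<partial>\<mu>) = ln 2" for m
  proof -
    have "(\<integral>x. hm m x \<partial>\<mu>) = (\<integral>x. ln 2 - gm m (doubling x) \<partial>\<mu>) + (\<integral>x. gm m x \<partial>\<mu>)"
      unfolding hm_def by (intro Bochner_Integration.integral_add Bochner_Integration.integrable_diff int_g int_gd) simp
    also have "(\<integral>x. ln 2 - gm m (doubling x) \<partial>\<mu>) = (\<integral>x. ln 2 \<partial>\<mu>) - (\<integral>x. gm m (doubling x) \<partial>\<mu>)"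
      by (intro Bochner_Integration.integral_diff int_gd) simp
    finally show ?thesis using eqint[of m] prob_space by simp
  qed
  have hnn: "0 \<le> hm m x" for m x using gm_step[of m x] by (simp add: hm_def)
  have hmeas: "(\<lambda>x. ennreal (hm m x)) \<in> borel_measurable \<mu>" for m
    using hint[of m] by (intro measurable_compose[OF borel_measurable_integrable[OF hint]]) simp
  have "(\<integral>\<^sup>+ x. e2ennreal (- f0 x) \<partial>\<mu>) \<le> (\<integral>\<^sup>+ x. liminf (\<lambda>m. ennreal (hm m x)) \<partial>\<mu>)"
    by (intro nn_integral_mono pointwise_liminf)
  also have "\<dots> \<le> liminf (\<lambda>m. \<integral>\<^sup>+ x. ennreal (hm m x) \<partial>\<mu>)"
    by (rule nn_integral_liminf[OF hmeas])
  also have "(\<lambda>m. \<integral>\<^sup>+ x. ennreal (hm m x) \<partial>\<mu>) = (\<lambda>m. ennreal (ln 2))"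
  proof
    fix m
    have "(\<integral>\<^sup>+ x. ennreal (hm m x) \<partial>\<mu>) = ennreal (\<integral>x. hm m x \<partial>\<mu>)"
      by (rule nn_integral_eq_integral[OF hint]) (simp add: hnn)
    then show "(\<integral>\<^sup>+ x. ennreal (hm m x) \<partial>\<mu>) = ennreal (ln 2)" by (simp add: hval)
  qed
  also have "liminf (\<lambda>m. ennreal (ln 2)) = ennreal (ln 2)" by (simp add: Liminf_const)
  finally have le: "(\<integral>\<^sup>+ x. e2ennreal (- f0 x) \<partial>\<mu>) \<le> ennreal (ln 2)" .
  have "enn2ereal (\<integral>\<^sup>+ x. e2ennreal (- f0 x) \<partial>\<mu>) \<le> enn2ereal (ennreal (ln 2))"
    using le by (simp only: less_eq_ennreal.rep_eq)
  then have "enn2ereal (\<integral>\<^sup>+ x. e2ennreal (- f0 x) \<partial>\<mu>) \<le> ereal (ln 2)" by simp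
  then show ?thesis unfolding int_f0_def ereal_minus_le_minus .
qed


lemma doubling_0: "doubling 0 = 0" by (simp add: doubling_def)

lemma f0_0: "f0 0 = 0" by (simp add: f0_def zero_ereal_def)

lemma delta0_inv: "return circle_borel 0 \<in> invariant_measures"
proof -
  have sp: "(0::real) \<in> space circle_borel" by (simp add: space_circle)
  show ?thesis unfolding invariant_measures_def
  proof (intro CollectI conjI ballI)
    show "sets (return circle_borel 0) = sets circle_borel" by simp
    show "prob_space (return circle_borel 0)" by (rule prob_space_return[OF sp])
    fix A assume "A \<in> sets (return circle_borel 0)"
    then have A: "A \<in> sets circle_borel" by simp
    have B: "doubling -` A \<inter> space circle_borel \<in> sets circle_borel"
      by (rule measurable_sets[OF doubling_meas A])
    show "emeasure (return circle_borel 0) (doubling -` A \<inter> space (return circle_borel 0)) = emeasure (return circle_borel 0) A"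
      using A B sp by (simp add: indicator_def doubling_0)
  qed
qed

lemma delta0_int: "int_f0 (return circle_borel 0) = 0"
proof -
  have sp: "(0::real) \<in> space circle_borel" by (simp add: space_circle)
  have "(\<integral>\<^sup>+ x. e2ennreal (- f0 x) \<partial>return circle_borel 0) = e2ennreal (- f0 0)"
    by (rule nn_integral_return[OF sp f0_meas])
  then show ?thesis by (simp add: int_f0_def f0_0 zero_ennreal.rep_eq)
qed

definition S3 :: "real set" where "S3 = {1/3, 2/3}"

definition mu2 :: "real measure" where
  "mu2 = distr (measure_pmf (pmf_of_set S3)) circle_borel frac"

lemma S3_ne: "S3 \<noteq> {}" and S3_fin: "finite S3" and S3_card: "card S3 = 2"
  by (auto simp: S3_def)

lemma frac_meas: "frac \<in> measure_pmf (pmf_of_set S3) \<rightarrow>\<^sub>M circle_borel"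
  by (simp add: space_circle frac_lt_1)

lemma frac13: "frac (1/3 :: real) = 1/3" and frac23: "frac (2/3 :: real) = 2/3"
  by (simp_all add: frac_eq)

lemma dbl13: "doubling (1/3) = 2/3" and dbl23: "doubling (2/3) = 1/3"
proof -
  show "doubling (1/3) = 2/3" by (simp add: doubling_def frac_eq)
  have "frac (4/3 :: real) = 4/3 - of_int 1" unfolding frac_def
    by (subst floor_unique[of 1]) simp_all
  then show "doubling (2/3) = 1/3" by (simp add: doubling_def)
qed

lemma two_pt: "a \<noteq> b \<Longrightarrow> {x \<in> {a, b}. P x} = (if P a then {a} else {}) \<union> (if P b then {b} else {})"
  by auto

lemma ne3: "(1/3::real) \<noteq> 2/3" by simp

lemma mu2_inv: "mu2 \<in> invariant_measures"
  unfolding invariant_measures_def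
proof (intro CollectI conjI ballI)
  show "sets mu2 = sets circle_borel" by (simp add: mu2_def)
  show "prob_space mu2" unfolding mu2_def
    by (rule measure_pmf.prob_space_distr[OF frac_meas])
  fix A assume "A \<in> sets mu2"
  then have A: "A \<in> sets circle_borel" by (simp add: mu2_def)
  have B: "doubling -` A \<inter> space circle_borel \<in> sets circle_borel"
    by (rule measurable_sets[OF doubling_meas A])
  have spm: "space mu2 = space circle_borel" by (simp add: mu2_def)
  have e1: "emeasure mu2 (doubling -` A \<inter> space mu2) = card (S3 \<inter> (frac -` (doubling -` A \<inter> space circle_borel) \<inter> UNIV)) / card S3"
    unfolding spm mu2_def by (simp add: emeasure_distr[OF frac_meas B] emeasure_pmf_of_set[OF S3_ne S3_fin])
  have e2: "emeasure mu2 A = card (S3 \<inter> (frac -` A \<inter> UNIV)) / card S3"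
    unfolding mu2_def by (simp add: emeasure_distr[OF frac_meas A] emeasure_pmf_of_set[OF S3_ne S3_fin])
  have "S3 \<inter> (frac -` (doubling -` A \<inter> space circle_borel) \<inter> UNIV) = {x\<in>S3. doubling (frac x) \<in> A}"
    using doubling_range by (auto simp: space_circle frac_lt_1)
  also have "\<dots> = (if 2/3 \<in> A then {1/3} else {}) \<union> (if 1/3 \<in> A then {2/3} else {})"
    unfolding S3_def two_pt[OF ne3] by (simp only: frac13 frac23 dbl13 dbl23)
  finally have c1: "S3 \<inter> (frac -` (doubling -` A \<inter> space circle_borel) \<inter> UNIV) = \<dots>" .
  have "S3 \<inter> (frac -` A \<inter> UNIV) = {x\<in>S3. frac x \<in> A}" by auto
  also have "\<dots> = (if 1/3 \<in> A then {1/3} else {}) \<union> (if 2/3 \<in> A then {2/3} else {})"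
    unfolding S3_def two_pt[OF ne3] by (simp only: frac13 frac23)
  finally have c2: "S3 \<inter> (frac -` A \<inter> UNIV) = \<dots>" .
  show "emeasure mu2 (doubling -` A \<inter> space mu2) = emeasure mu2 A"
    unfolding e1 e2 c1 c2 by (cases "1/3 \<in> A"; cases "2/3 \<in> A") auto
qed

lemma f0_13: "f0 (1/3) = - ereal (ln 2)" and f0_23: "f0 (2/3) = - ereal (ln 2)"
proof -
  have c1: "cos (pi * (1/3)) = 1/2" using cos_60 by simp
  have "cos (pi * (2/3)) = cos (pi - pi / 3)" by (simp add: field_simps)
  also have "\<dots> = - (1/2)" unfolding cos_diff by (simp add: cos_60)
  finally have c2: "cos (pi * (2/3)) = - (1/2)" .
  show "f0 (1/3) = - ereal (ln 2)" unfolding f0_def c1 by (simp add: ln_div)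
  show "f0 (2/3) = - ereal (ln 2)" unfolding f0_def c2 by (simp add: ln_div)
qed

lemma mu2_int: "int_f0 mu2 = - ereal (ln 2)"
proof -
  have "(\<integral>\<^sup>+ x. e2ennreal (- f0 x) \<partial>mu2) = (\<integral>\<^sup>+ x. e2ennreal (- f0 (frac x)) \<partial>measure_pmf (pmf_of_set S3))"
    unfolding mu2_def by (rule nn_integral_distr[OF frac_meas]) (unfold measurable_distr_eq1, rule f0_meas)
  also have "\<dots> = (\<Sum>x\<in>S3. e2ennreal (- f0 (frac x))) / of_nat (card S3)"
    by (rule nn_integral_pmf_of_set[OF S3_ne S3_fin])
  also have "\<dots> = (ennreal (ln 2) * 2) / 2"
    by (simp add: S3_def frac13 frac23 f0_13 f0_23 S3_card[unfolded S3_def] mult_2_right)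
  also have "\<dots> = ennreal (ln 2)"
    by (rule ennreal_mult_divide_eq) simp_all
  finally show ?thesis by (simp add: int_f0_def)
qed


theorem theorem5p1:
  shows "(INF \<mu>\<in>invariant_measures. int_f0 \<mu>) = - ereal (ln 2) \<and>
    (SUP \<mu>\<in>invariant_measures. int_f0 \<mu>) = 0 \<and>
    (\<forall>x\<in>{0..<1}. \<forall>L. (\<lambda>n. birkhoff_avg n x) \<longlonglongrightarrow> L \<longrightarrow>
           L \<in> {0, - ereal (ln 2), -\<infinity>}) \<and>
    ((\<lambda>n. birkhoff_avg n 0) \<longlonglongrightarrow> 0) \<and>
    (\<forall>x\<in>{0..<1}. dyadic_odd x \<longrightarrow> (\<lambda>n. birkhoff_avg n x) \<longlonglongrightarrow> -\<infinity>) \<and>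
    (\<forall>x\<in>{0..<1}. x \<noteq> 0 \<and> \<not> dyadic_odd x \<longrightarrow>
           (\<forall>L. (\<lambda>n. birkhoff_avg n x) \<longlonglongrightarrow> L \<longrightarrow> L = - ereal (ln 2))) \<and>
    (AE x in lborel. x \<in> {0..<1} \<longrightarrow>
           (\<lambda>n. birkhoff_avg n x) \<longlonglongrightarrow> - ereal (ln 2))"
proof -
  have c1: "(INF \<mu>\<in>invariant_measures. int_f0 \<mu>) = - ereal (ln 2)"
  proof (rule antisym)
    show "(INF \<mu>\<in>invariant_measures. int_f0 \<mu>) \<le> - ereal (ln 2)"
      using INF_lower[OF mu2_inv, of int_f0] mu2_int by simp
    show "- ereal (ln 2) \<le> (INF \<mu>\<in>invariant_measures. int_f0 \<mu>)"
      by (rule INF_greatest) (rule lower_bound)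
  qed
  have c2: "(SUP \<mu>\<in>invariant_measures. int_f0 \<mu>) = 0"
  proof (rule antisym)
    show "(SUP \<mu>\<in>invariant_measures. int_f0 \<mu>) \<le> 0"
      by (rule SUP_least) (simp add: int_f0_def)
    show "0 \<le> (SUP \<mu>\<in>invariant_measures. int_f0 \<mu>)"
      using SUP_upper[OF delta0_inv, of int_f0] delta0_int by simp
  qed
  have c3: "\<forall>x\<in>{0..<1}. \<forall>L. (\<lambda>n. birkhoff_avg n x) \<longlonglongrightarrow> L \<longrightarrow> L \<in> {0, - ereal (ln 2), -\<infinity>}"
  proof (intro ballI allI impI)
    fix x :: real and L assume x: "x \<in> {0..<1}" and lim: "(\<lambda>n. birkhoff_avg n x) \<longlonglongrightarrow> L"
    show "L \<in> {0, - ereal (ln 2), -\<infinity>}"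
    proof (cases "x = 0")
      case True
      then have "L = 0" using LIMSEQ_unique[OF lim] conj_zero by simp
      then show ?thesis by simp
    next
      case False
      show ?thesis
      proof (cases "dyadic_odd x")
        case True
        then have "L = -\<infinity>" using LIMSEQ_unique[OF lim conj_dyadic[OF True]] by simp
        then show ?thesis by simp
      next
        case nd: False
        then have "L = - ereal (ln 2)" using conj_nondyadic[OF x False nd lim] by simp
        then show ?thesis by simp
      qed
    qed
  qed
  show ?thesis
    using c1 c2 c3 conj_zero conj_dyadic conj_nondyadic conj_AE by blast
qed

end
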